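(* Let $\varphi$ be a mean on $L^{\infty}(\mathbb{R}_+)$. Then $\varphi\in\mathcal{M}_1$ if and only if $\varphi(f-Sf)=0$ for every $f\in L^{\infty}(\mathbb{R}_+)$, i.e. if and only if $\varphi$ vanishes on $\Phi'=\{f-Sf : f\in L^{\infty}(\mathbb{R}_+)\}$; equivalently, $\varphi\in\mathcal{M}_1$ if and only if $\varphi(Sf)=\varphi(f)$ for all $f\in L^{\infty}(\mathbb{R}_+)$.
   Context: $\mathbb{R}_+=[0,\infty)$ and $L^{\infty}(\mathbb{R}_+)$ is the Banach space of real-valued essentially bounded measurable functions on $\mathbb{R}_+$, ordered by $f\ge0$ a.e. A mean on $L^{\infty}(\mathbb{R}_+)$ is a linear functional $\varphi$ with $\varphi(f)\ge 0$ whenever $f\ge0$ and $\varphi(1)=1$. Define $\overline{M}_1(f)=\lim_{\theta\to\infty}\limsup_{x\to\infty}\frac{1}{\theta}\int_x^{x+\theta}f(t)\,dt$, and let $\mathcal{M}_1$ be the set of means $\varphi$ on $L^{\infty}(\mathbb{R}_+)$ with $\varphi(f)\le\overline{M}_1(f)$ for all $f\in L^{\infty}(\mathbb{R}_+)$. The operator $S:L^{\infty}(\mathbb{R}_+)\to L^{\infty}(\mathbb{R}_+)$ is $(Sf)(x)=e^{-x}\int_0^x f(t)e^t\,dt$. *)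

theory Defs
  imports "HOL-Analysis.Analysis"
begin

text \<open>L-infinity on R_+ represented by measurable functions real => real that are
  essentially bounded on [0,infinity); values on negative reals are irrelevant.
  Elements equal a.e. on [0,infinity) are identified implicitly: positivity of a mean
  forces it to agree on them.\<close>

definition Linf :: "(real \<Rightarrow> real) set" where
  "Linf = {f. f \<in> borel_measurable lborel \<and>
              (\<exists>C. AE x in lborel. x \<ge> 0 \<longrightarrow> \<bar>f x\<bar> \<le> C)}"

definition is_mean :: "((real \<Rightarrow> real) \<Rightarrow> real) \<Rightarrow> bool" where
  "is_mean \<phi> \<longleftrightarrow>
     (\<forall>f\<in>Linf. \<forall>g\<in>Linf. \<forall>a b::real. \<phi> (\<lambda>x. a * f x + b * g x) = a * \<phi> f + b * \<phi> g) \<and>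
     (\<forall>f\<in>Linf. (AE x in lborel. x \<ge> 0 \<longrightarrow> f x \<ge> 0) \<longrightarrow> \<phi> f \<ge> 0) \<and>
     \<phi> (\<lambda>x. 1) = 1"

definition M1_upper :: "(real \<Rightarrow> real) \<Rightarrow> real" where
  "M1_upper f = Lim at_top (\<lambda>\<theta>::real. real_of_ereal
      (Limsup at_top (\<lambda>x::real. ereal ((1 / \<theta>) * (LINT t:{x..x+\<theta>}|lborel. f t)))))"

definition M1 :: "((real \<Rightarrow> real) \<Rightarrow> real) set" where
  "M1 = {\<phi>. is_mean \<phi> \<and> (\<forall>f\<in>Linf. \<phi> f \<le> M1_upper f)}"

definition S_op :: "(real \<Rightarrow> real) \<Rightarrow> real \<Rightarrow> real" where
  "S_op f = (\<lambda>x. exp (- x) * (LINT t:{0..x}|lborel. f t * exp t))"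

end

theory Submission
  imports Defs
begin


lemma Linf_bound:
  assumes "f \<in> Linf"
  obtains C where "C \<ge> 0" "AE x in lborel. x \<ge> 0 \<longrightarrow> \<bar>f x\<bar> \<le> C"
proof -
  from assms obtain C where C: "AE x in lborel. x \<ge> 0 \<longrightarrow> \<bar>f x\<bar> \<le> C" unfolding Linf_def by auto
  have "AE x in lborel. x \<ge> 0 \<longrightarrow> \<bar>f x\<bar> \<le> max C 0" using C by eventually_elim auto
  then show ?thesis using that[of "max C 0"] by auto
qed

lemma Linf_meas: "f \<in> Linf \<Longrightarrow> f \<in> borel_measurable lborel"
  unfolding Linf_def by auto

lemma LinfI:
  assumes "f \<in> borel_measurable lborel" "\<And>x. x \<ge> 0 \<Longrightarrow> \<bar>f x\<bar> \<le> C"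
  shows "f \<in> Linf"
  using assms unfolding Linf_def by (auto intro!: exI[of _ C])

lemma LinfI_AE:
  assumes "f \<in> borel_measurable lborel" "AE x in lborel. x \<ge> 0 \<longrightarrow> \<bar>f x\<bar> \<le> C"
  shows "f \<in> Linf"
  using assms unfolding Linf_def by (auto intro!: exI[of _ C])

lemma Linf_lin:
  assumes "f \<in> Linf" "g \<in> Linf"
  shows "(\<lambda>x. a * f x + b * g x) \<in> Linf"
proof -
  obtain C where C: "AE x in lborel. x \<ge> 0 \<longrightarrow> \<bar>f x\<bar> \<le> C" using Linf_bound[OF assms(1)] by blast
  obtain D where D: "AE x in lborel. x \<ge> 0 \<longrightarrow> \<bar>g x\<bar> \<le> D" using Linf_bound[OF assms(2)] by blast
  have "AE x in lborel. x \<ge> 0 \<longrightarrow> \<bar>a * f x + b * g x\<bar> \<le> \<bar>a\<bar> * C + \<bar>b\<bar> * D"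
    using C D
  proof eventually_elim
    case (elim x)
    show ?case
    proof
      assume "x \<ge> 0"
      then have "\<bar>f x\<bar> \<le> C" "\<bar>g x\<bar> \<le> D" using elim by auto
      then have "\<bar>a * f x\<bar> \<le> \<bar>a\<bar> * C" "\<bar>b * g x\<bar> \<le> \<bar>b\<bar> * D"
        by (auto simp: abs_mult intro: mult_left_mono)
      then show "\<bar>a * f x + b * g x\<bar> \<le> \<bar>a\<bar> * C + \<bar>b\<bar> * D" by linarith
    qed
  qed
  moreover have "(\<lambda>x. a * f x + b * g x) \<in> borel_measurable lborel"
    using Linf_meas[OF assms(1)] Linf_meas[OF assms(2)] by measurable
  ultimately show ?thesis by (intro LinfI_AE)
qed

lemma Linf_const: "(\<lambda>x. c) \<in> Linf"
  by (rule LinfI[of _ "\<bar>c\<bar>"]) auto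

lemma Linf_diff: "f \<in> Linf \<Longrightarrow> g \<in> Linf \<Longrightarrow> (\<lambda>x. f x - g x) \<in> Linf"
  using Linf_lin[of f g 1 "-1"] by simp
lemma Linf_add: "f \<in> Linf \<Longrightarrow> g \<in> Linf \<Longrightarrow> (\<lambda>x. f x + g x) \<in> Linf"
  using Linf_lin[of f g 1 "1"] by simp
lemma Linf_scale: "f \<in> Linf \<Longrightarrow> (\<lambda>x. a * f x) \<in> Linf"
  using Linf_lin[of f f a 0] by simp
lemma Linf_uminus: "f \<in> Linf \<Longrightarrow> (\<lambda>x. - f x) \<in> Linf"
  using Linf_lin[of f f "-1" 0] by simp

context
  fixes \<phi> :: "(real \<Rightarrow> real) \<Rightarrow> real"
  assumes mean: "is_mean \<phi>"
begin

lemma phi_lin: "f \<in> Linf \<Longrightarrow> g \<in> Linf \<Longrightarrow> \<phi> (\<lambda>x. a * f x + b * g x) = a * \<phi> f + b * \<phi> g"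
  using mean unfolding is_mean_def by blast

lemma phi_pos: "f \<in> Linf \<Longrightarrow> (AE x in lborel. x \<ge> 0 \<longrightarrow> f x \<ge> 0) \<Longrightarrow> \<phi> f \<ge> 0"
  using mean unfolding is_mean_def by blast

lemma phi_one: "\<phi> (\<lambda>x. 1) = 1"
  using mean unfolding is_mean_def by blast

lemma phi_diff: "f \<in> Linf \<Longrightarrow> g \<in> Linf \<Longrightarrow> \<phi> (\<lambda>x. f x - g x) = \<phi> f - \<phi> g"
  using phi_lin[of f g 1 "-1"] by simp
lemma phi_add: "f \<in> Linf \<Longrightarrow> g \<in> Linf \<Longrightarrow> \<phi> (\<lambda>x. f x + g x) = \<phi> f + \<phi> g"
  using phi_lin[of f g 1 "1"] by simp
lemma phi_scale: "f \<in> Linf \<Longrightarrow> \<phi> (\<lambda>x. a * f x) = a * \<phi> f"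
  using phi_lin[of f f a 0] by simp
lemma phi_uminus: "f \<in> Linf \<Longrightarrow> \<phi> (\<lambda>x. - f x) = - \<phi> f"
  using phi_lin[of f f "-1" 0] by simp
lemma phi_const: "\<phi> (\<lambda>x. c) = c"
  using phi_scale[OF Linf_const[of 1], of c] phi_one by simp

lemma phi_mono:
  assumes "f \<in> Linf" "g \<in> Linf" "AE x in lborel. x \<ge> 0 \<longrightarrow> f x \<le> g x"
  shows "\<phi> f \<le> \<phi> g"
proof -
  have "\<phi> (\<lambda>x. g x - f x) \<ge> 0"
    using assms by (intro phi_pos Linf_diff) (auto elim!: eventually_mono)
  then show ?thesis using phi_diff[OF assms(2,1)] by simp
qed

lemma phi_cong:
  assumes "f \<in> Linf" "g \<in> Linf" "AE x in lborel. x \<ge> 0 \<longrightarrow> f x = g x"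
  shows "\<phi> f = \<phi> g"
proof -
  have "AE x in lborel. x \<ge> 0 \<longrightarrow> f x \<le> g x" "AE x in lborel. x \<ge> 0 \<longrightarrow> g x \<le> f x"
    using assms(3) by (auto elim!: eventually_mono)
  then show ?thesis using phi_mono[OF assms(1,2)] phi_mono[OF assms(2,1)] by force
qed

end


lemma cont_meas: "continuous_on UNIV K \<Longrightarrow> (K::real\<Rightarrow>real) \<in> borel_measurable lborel"
  by (simp add: borel_measurable_continuous_onI)

lemma Linf_set_int:
  assumes f: "f \<in> Linf" and K: "continuous_on UNIV K" and a: "0 \<le> a"
  shows "set_integrable lborel {a..b} (\<lambda>s. K s * f s)"
proof -
  obtain C where C: "C \<ge> 0" "AE x in lborel. x \<ge> 0 \<longrightarrow> \<bar>f x\<bar> \<le> C" using Linf_bound[OF f] by blast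
  have "bounded (K ` {a..b})"
    by (intro compact_imp_bounded compact_continuous_image continuous_on_subset[OF K]) auto
  then obtain M where M: "\<forall>x\<in>{a..b}. \<bar>K x\<bar> \<le> M" by (auto simp: bounded_iff)
  show ?thesis unfolding set_integrable_def
  proof (rule integrableI_bounded_set_indicator[where B="M * C"])
    show "(\<lambda>s. K s * f s) \<in> borel_measurable lborel"
      using cont_meas[OF K] Linf_meas[OF f] by measurable
    show "AE x in lborel. x \<in> {a..b} \<longrightarrow> norm (K x * f x) \<le> M * C"
      using C(2)
    proof eventually_elim
      case (elim x)
      show ?case
      proof
        assume x: "x \<in> {a..b}"
        then have "\<bar>f x\<bar> \<le> C" using elim a by auto
        moreover have "\<bar>K x\<bar> \<le> M" using M x by auto
        ultimately show "norm (K x * f x) \<le> M * C"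
          by (simp add: abs_mult mult_mono')
      qed
    qed
  qed (auto simp: emeasure_lborel_Icc_eq)
qed

lemma Linf_set_int1:
  assumes f: "f \<in> Linf" and a: "0 \<le> a"
  shows "set_integrable lborel {a..b} f"
  using Linf_set_int[OF f _ a, of "\<lambda>_. 1" b] by simp

lemma wbound:
  assumes f: "f \<in> Linf" and C: "AE x in lborel. x \<ge> 0 \<longrightarrow> \<bar>f x\<bar> \<le> C"
    and K: "continuous_on UNIV w" and w: "\<And>x. w x \<ge> 0" and a: "0 \<le> a"
  shows "\<bar>LINT s:{a..b}|lborel. w s * f s\<bar> \<le> C * (LINT s:{a..b}|lborel. w s)"
proof -
  have i1: "set_integrable lborel {a..b} (\<lambda>s. w s * f s)" by (rule Linf_set_int[OF f K a])
  have i2: "set_integrable lborel {a..b} w"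
    by (rule borel_integrable_atLeastAtMost') (rule continuous_on_subset[OF K], auto)
  have i3: "set_integrable lborel {a..b} (\<lambda>s. C * w s)" using i2 by auto
  have i4: "set_integrable lborel {a..b} (\<lambda>s. (- C) * w s)" by (rule set_integrable_mult_right) (rule i2)
  have "AE x \<in> {a..b} in lborel. w x * f x \<le> C * w x" using C
  proof eventually_elim
    case (elim x)
    show ?case
    proof
      assume x: "x \<in> {a..b}"
      then have "f x \<le> C" using elim a by auto
      then show "w x * f x \<le> C * w x" using w[of x] by (simp add: mult.commute mult_right_mono)
    qed
  qed
  from set_integral_mono_AE[OF i1 i3 this] have 1: "(LINT s:{a..b}|lborel. w s * f s) \<le> C * (LINT s:{a..b}|lborel. w s)"
    by simp
  have "AE x \<in> {a..b} in lborel. (- C) * w x \<le> w x * f x" using C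
  proof eventually_elim
    case (elim x)
    show ?case
    proof
      assume x: "x \<in> {a..b}"
      then have "- C \<le> f x" using elim a by auto
      then have "w x * (- C) \<le> w x * f x" using w[of x] by (rule mult_left_mono)
      then show "(- C) * w x \<le> w x * f x" by (simp add: algebra_simps)
    qed
  qed
  note m2 = set_integral_mono_AE[OF i4 i1 this]
  have 2: "- (C * (LINT s:{a..b}|lborel. w s)) \<le> (LINT s:{a..b}|lborel. w s * f s)"
  proof -
    have "(LINT x:{a..b}|lborel. (-C) * w x) = (-C) * (LINT x:{a..b}|lborel. w x)" by (rule set_integral_mult_right)
    then show ?thesis using m2 by linarith
  qed
  from 1 2 show ?thesis by linarith
qed

lemma FTC_Icc:
  fixes a b :: real
  assumes ab: "a \<le> b" and G: "\<And>x. (G has_real_derivative K x) (at x)" and K: "continuous_on UNIV K"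
  shows "(LINT x:{a..b}|lborel. K x) = G b - G a"
proof -
  have "(LBINT x=a..b. K x) = G b - G a"
    by (rule interval_integral_FTC_finite)
       (auto intro: continuous_on_subset[OF K] has_vector_derivative_at_within
             simp: has_real_derivative_iff_has_vector_derivative[symmetric] G has_field_derivative_at_within)
  then show ?thesis using interval_integral_Icc[OF ab, of K] by metis
qed

lemma LINT_split:
  fixes f :: "real \<Rightarrow> real"
  assumes f: "set_integrable lborel {a..c} f" and ab: "a \<le> b" "b \<le> c"
  shows "(LINT x:{a..c}|lborel. f x) = (LINT x:{a..b}|lborel. f x) + (LINT x:{b..c}|lborel. f x)"
proof -
  have f1: "set_integrable lborel {a..b} f" by (rule set_integrable_subset[OF f]) (use ab in auto)
  have f2: "set_integrable lborel {b..c} f" by (rule set_integrable_subset[OF f]) (use ab in auto)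
  show ?thesis
    using set_borel_integral_eq_integral[OF f] set_borel_integral_eq_integral[OF f1]
      set_borel_integral_eq_integral[OF f2] Henstock_Kurzweil_Integration.integral_combine[OF ab, of f] by simp
qed

lemma LINT_point: "(LINT x:{a::real}|lborel. (f x::real)) = 0"
  using interval_integral_Icc[of a a f] by simp

definition Fi :: "(real \<Rightarrow> real) \<Rightarrow> real \<Rightarrow> real" where
  "Fi f x = (LINT s:{0..x}|lborel. f s)"

lemma Fi_nonpos: "x \<le> 0 \<Longrightarrow> Fi f x = 0"
proof (cases "x = 0")
  case True then show ?thesis unfolding Fi_def using LINT_point[of 0 f] by simp
qed (auto simp: Fi_def set_lebesgue_integral_def)

lemma LINT_one: "a \<le> b \<Longrightarrow> (LINT s:{a..b}|lborel. (1::real)) = b - a"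
  using FTC_Icc[of a b "\<lambda>x. x" "\<lambda>_. 1"] by (auto intro!: derivative_eq_intros)

lemma Fi_diff:
  assumes f: "f \<in> Linf" and xy: "0 \<le> x" "x \<le> y"
  shows "Fi f y - Fi f x = (LINT s:{x..y}|lborel. f s)"
  unfolding Fi_def using LINT_split[OF Linf_set_int1[OF f order.refl, of y] xy] by simp

lemma Fi_lip0:
  assumes f: "f \<in> Linf" and C: "AE x in lborel. x \<ge> 0 \<longrightarrow> \<bar>f x\<bar> \<le> C"
    and xy: "0 \<le> x" "x \<le> y"
  shows "\<bar>Fi f y - Fi f x\<bar> \<le> C * (y - x)"
  using wbound[OF f C _ _ xy(1), of "\<lambda>_. 1" y] Fi_diff[OF f xy] LINT_one[OF xy(2)] by simp

lemma Fi_lip: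
  assumes f: "f \<in> Linf" and C: "AE x in lborel. x \<ge> 0 \<longrightarrow> \<bar>f x\<bar> \<le> C" "C \<ge> 0"
  shows "\<bar>Fi f y - Fi f x\<bar> \<le> C * \<bar>y - x\<bar>"
proof -
  have *: "\<bar>Fi f y - Fi f x\<bar> \<le> C * (y - x)" if "x \<le> y" for x y
  proof (cases "y \<le> 0")
    case True then show ?thesis using that C by (simp add: Fi_nonpos)
  next
    case False
    show ?thesis
    proof (cases "x \<ge> 0")
      case True then show ?thesis using Fi_lip0[OF f C(1) True that] by simp
    next
      case False
      then have "\<bar>Fi f y - Fi f x\<bar> = \<bar>Fi f y - Fi f 0\<bar>" by (simp add: Fi_nonpos)
      also have "\<dots> \<le> C * (y - 0)" using Fi_lip0[OF f C(1), of 0 y] \<open>\<not> y \<le> 0\<close> by simp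
      also have "\<dots> \<le> C * (y - x)" using False C(2) by (intro mult_left_mono) auto
      finally show ?thesis .
    qed
  qed
  show ?thesis
    using *[of x y] *[of y x] by (cases "x \<le> y") (auto simp: abs_minus_commute)
qed

lemma Fi_cont:
  assumes f: "f \<in> Linf"
  shows "continuous_on UNIV (Fi f)"
proof -
  obtain C where C: "C \<ge> 0" "AE x in lborel. x \<ge> 0 \<longrightarrow> \<bar>f x\<bar> \<le> C" using Linf_bound[OF f] by blast
  have "C-lipschitz_on UNIV (Fi f)"
    by (rule lipschitz_onI) (use Fi_lip[OF f C(2,1)] C(1) in \<open>auto simp: dist_real_def\<close>)
  then show ?thesis by (rule lipschitz_on_continuous_on)
qed



lemma fub0:
  fixes h K :: "real \<Rightarrow> real"
  assumes h[measurable]: "h \<in> borel_measurable lborel" and hb: "\<And>s. \<bar>h s\<bar> \<le> C"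
    and K: "continuous_on UNIV K" and b: "0 \<le> b"
  shows "(LINT t:{0..b}|lborel. K t * (LINT s:{0..t}|lborel. h s))
       = (LINT s:{0..b}|lborel. h s * (LINT t:{s..b}|lborel. K t))"
proof -
  have Km[measurable]: "K \<in> borel_measurable lborel" by (rule cont_meas[OF K])
  define H where "H t s = (if 0 \<le> t \<and> t \<le> b \<and> 0 \<le> s \<and> s \<le> t then K t * h s else 0)" for t s
  have "bounded (K ` {0..b})"
    by (intro compact_imp_bounded compact_continuous_image continuous_on_subset[OF K]) auto
  then obtain M where M: "\<forall>x\<in>{0..b}. \<bar>K x\<bar> \<le> M" by (auto simp: bounded_iff)
  have Hm: "(\<lambda>(t, s). H t s) \<in> borel_measurable (lborel \<Otimes>\<^sub>M lborel)"
    unfolding H_def by measurable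
  have int: "integrable (lborel \<Otimes>\<^sub>M lborel) (\<lambda>(t, s). H t s)"
  proof (rule integrableI_bounded_set[where A="{0..b} \<times> {0..b}" and B="M * C"])
    show "emeasure (lborel \<Otimes>\<^sub>M lborel) ({0..b} \<times> {0..b}) < \<infinity>"
      by (subst lborel.emeasure_pair_measure_Times) (auto simp: emeasure_lborel_Icc_eq ennreal_mult_less_top)
    have "norm (H t s) \<le> M * C" if ts: "t \<in> {0..b}" "s \<in> {0..b}" for t s
    proof -
      have "\<bar>K t\<bar> \<le> M" using M ts by auto
      then have "\<bar>K t * h s\<bar> \<le> M * C" using hb[of s] by (simp add: abs_mult mult_mono')
      then show ?thesis
        using ts by (auto simp: H_def order.trans[OF _ abs_ge_zero])
    qed
    then show "AE x in lborel \<Otimes>\<^sub>M lborel. x \<in> {0..b} \<times> {0..b} \<longrightarrow> norm (case x of (t, s) \<Rightarrow> H t s) \<le> M * C"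
      by (intro AE_I2) auto
    show "AE x in lborel \<Otimes>\<^sub>M lborel. x \<notin> {0..b} \<times> {0..b} \<longrightarrow> (case x of (t, s) \<Rightarrow> H t s) = 0"
      by (rule AE_I2) (auto simp: H_def split: if_splits)
  qed (use Hm in auto)
  have L: "(LINT t:{0..b}|lborel. K t * (LINT s:{0..t}|lborel. h s)) = (\<integral>t. (\<integral>s. H t s \<partial>lborel) \<partial>lborel)"
    unfolding set_lebesgue_integral_def
  proof (rule Bochner_Integration.integral_cong[OF refl])
    fix t
    have "indicator {0..b} t *\<^sub>R (K t * (\<integral>s. indicator {0..t} s *\<^sub>R h s \<partial>lborel))
        = (\<integral>s. indicator {0..b} t * K t * (indicator {0..t} s * h s) \<partial>lborel)"
      by simp
    also have "\<dots> = (\<integral>s. H t s \<partial>lborel)"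
      by (rule Bochner_Integration.integral_cong) (auto simp: H_def split: split_indicator)
    finally show "indicator {0..b} t *\<^sub>R (K t * (\<integral>s. indicator {0..t} s *\<^sub>R h s \<partial>lborel)) = (\<integral>s. H t s \<partial>lborel)" .
  qed
  have R: "(LINT s:{0..b}|lborel. h s * (LINT t:{s..b}|lborel. K t)) = (\<integral>s. (\<integral>t. H t s \<partial>lborel) \<partial>lborel)"
    unfolding set_lebesgue_integral_def
  proof (rule Bochner_Integration.integral_cong[OF refl])
    fix s
    have "indicator {0..b} s *\<^sub>R (h s * (\<integral>t. indicator {s..b} t *\<^sub>R K t \<partial>lborel))
        = (\<integral>t. indicator {0..b} s * h s * (indicator {s..b} t * K t) \<partial>lborel)"
      by simp
    also have "\<dots> = (\<integral>t. H t s \<partial>lborel)"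
      by (rule Bochner_Integration.integral_cong) (auto simp: H_def split: split_indicator)
    finally show "indicator {0..b} s *\<^sub>R (h s * (\<integral>t. indicator {s..b} t *\<^sub>R K t \<partial>lborel)) = (\<integral>t. H t s \<partial>lborel)" .
  qed
  show ?thesis unfolding L R using lborel_pair.Fubini_integral[OF int] by simp
qed


lemma fub:
  fixes f K L :: "real \<Rightarrow> real"
  assumes f: "f \<in> Linf" and L: "continuous_on UNIV L" and K: "continuous_on UNIV K" and b: "0 \<le> b"
  shows "(LINT t:{0..b}|lborel. K t * (LINT s:{0..t}|lborel. L s * f s))
       = (LINT s:{0..b}|lborel. L s * f s * (LINT t:{s..b}|lborel. K t))"
proof -
  obtain C where C: "C \<ge> 0" "AE x in lborel. x \<ge> 0 \<longrightarrow> \<bar>f x\<bar> \<le> C" using Linf_bound[OF f] by blast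
  have "bounded (L ` {0..b})"
    by (intro compact_imp_bounded compact_continuous_image continuous_on_subset[OF L]) auto
  then obtain M where M: "\<forall>x\<in>{0..b}. \<bar>L x\<bar> \<le> M" by (auto simp: bounded_iff)
  have fm[measurable]: "f \<in> borel_measurable lborel" using Linf_meas[OF f] .
  have Lm[measurable]: "L \<in> borel_measurable lborel" by (rule cont_meas[OF L])
  define h0 where "h0 s = (if 0 \<le> s \<and> s \<le> b \<and> \<bar>f s\<bar> \<le> C then L s * f s else 0)" for s
  have h0m: "h0 \<in> borel_measurable lborel" unfolding h0_def by measurable
  have h0b: "\<bar>h0 s\<bar> \<le> M * C" for s
  proof (cases "0 \<le> s \<and> s \<le> b \<and> \<bar>f s\<bar> \<le> C")
    case True
    then have "\<bar>L s\<bar> \<le> M" using M by auto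
    then show ?thesis using True by (simp add: h0_def abs_mult mult_mono')
  next
    case False
    have "0 \<le> M" using M[rule_format, of 0] b by auto
    then show ?thesis using False C(1) unfolding h0_def by (auto simp: if_split)
  qed
  have ae: "AE s in lborel. s \<in> {0..b} \<longrightarrow> L s * f s = h0 s"
    using C(2) by eventually_elim (auto simp: h0_def)
  have inner: "(LINT s:{0..t}|lborel. L s * f s) = (LINT s:{0..t}|lborel. h0 s)" if t: "t \<in> {0..b}" for t
    by (rule set_lebesgue_integral_cong_AE) (use h0m ae t in \<open>auto elim!: eventually_mono\<close>)
  have "(LINT t:{0..b}|lborel. K t * (LINT s:{0..t}|lborel. L s * f s))
      = (LINT t:{0..b}|lborel. K t * (LINT s:{0..t}|lborel. h0 s))"
    by (rule set_lebesgue_integral_cong) (auto simp: inner)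
  also have "\<dots> = (LINT s:{0..b}|lborel. h0 s * (LINT t:{s..b}|lborel. K t))"
    by (rule fub0[OF h0m h0b K b])
  also have "\<dots> = (LINT s:{0..b}|lborel. L s * f s * (LINT t:{s..b}|lborel. K t))"
  proof (rule set_lebesgue_integral_cong_AE)
    have "(\<lambda>s. LINT t:{s..b}|lborel. K t) \<in> borel_measurable lborel"
    proof -
      have Km[measurable]: "K \<in> borel_measurable lborel" by (rule cont_meas[OF K])
      have "(\<lambda>(s, t). if s \<le> t \<and> t \<le> b then K t else 0) \<in> borel_measurable (lborel \<Otimes>\<^sub>M lborel)"
        by measurable
      then have "(\<lambda>s. \<integral>t. (if s \<le> t \<and> t \<le> b then K t else 0) \<partial>lborel) \<in> borel_measurable lborel"
        by (rule lborel.borel_measurable_lebesgue_integral)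
      moreover have "(\<lambda>s. \<integral>t. (if s \<le> t \<and> t \<le> b then K t else 0) \<partial>lborel) = (\<lambda>s. LINT t:{s..b}|lborel. K t)"
        unfolding set_lebesgue_integral_def
        by (intro ext Bochner_Integration.integral_cong) (auto split: split_indicator)
      ultimately show ?thesis by simp
    qed
    then show "(\<lambda>s. h0 s * (LINT t:{s..b}|lborel. K t)) \<in> borel_measurable lborel"
      "(\<lambda>s. L s * f s * (LINT t:{s..b}|lborel. K t)) \<in> borel_measurable lborel"
      using h0m by measurable
    show "AE x\<in>{0..b} in lborel. h0 x * (LINT t:{x..b}|lborel. K t) = L x * f x * (LINT t:{x..b}|lborel. K t)"
      using ae by eventually_elim auto
  qed auto
  finally show ?thesis .
qed


lemma indef_meas:
  fixes g :: "real \<Rightarrow> real"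
  assumes g[measurable]: "g \<in> borel_measurable lborel"
  shows "(\<lambda>x. LINT t:{0..x}|lborel. g t) \<in> borel_measurable lborel"
proof -
  have "(\<lambda>(x, t). if 0 \<le> t \<and> t \<le> x then g t else 0) \<in> borel_measurable (lborel \<Otimes>\<^sub>M lborel)"
    by measurable
  then have "(\<lambda>x. \<integral>t. (if 0 \<le> t \<and> t \<le> x then g t else 0) \<partial>lborel) \<in> borel_measurable lborel"
    by (rule lborel.borel_measurable_lebesgue_integral)
  moreover have "(\<lambda>x. \<integral>t. (if 0 \<le> t \<and> t \<le> x then g t else 0) \<partial>lborel) = (\<lambda>x. LINT t:{0..x}|lborel. g t)"
    unfolding set_lebesgue_integral_def
    by (intro ext Bochner_Integration.integral_cong) (auto split: split_indicator)
  ultimately show ?thesis by simp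
qed

lemma cont_exp: "continuous_on UNIV (exp::real\<Rightarrow>real)"
  by (rule continuous_at_imp_continuous_on) auto
lemma cont_expm: "continuous_on UNIV (\<lambda>t::real. exp (- t))"
  by (intro continuous_on_exp continuous_on_minus continuous_on_id)

lemma LINT_exp: "(a::real) \<le> b \<Longrightarrow> (LINT t:{a..b}|lborel. exp t) = exp b - exp a"
  using FTC_Icc[of a b exp exp] cont_exp by (auto intro!: derivative_eq_intros)

lemma LINT_expm: "(LINT t:{a..b}|lborel. exp (- t)) = exp (- a) - exp (- b)" if "(a::real) \<le> b"
proof -
  have "((\<lambda>t. - exp (- t)) has_real_derivative exp (- x)) (at x)" for x::real
    by (auto intro!: derivative_eq_intros)
  then show ?thesis using FTC_Icc[of a b "\<lambda>t. - exp (- t)" "\<lambda>t. exp (- t)"] cont_expm that by auto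
qed

lemma S_bound:
  assumes f: "f \<in> Linf" and C: "AE x in lborel. x \<ge> 0 \<longrightarrow> \<bar>f x\<bar> \<le> C" and "C \<ge> 0" and x: "x \<ge> 0"
  shows "\<bar>S_op f x\<bar> \<le> C"
proof -
  have "\<bar>LINT t:{0..x}|lborel. exp t * f t\<bar> \<le> C * (LINT t:{0..x}|lborel. exp t)"
    by (rule wbound[OF f C cont_exp]) (use x in auto)
  also have "\<dots> = C * (exp x - 1)" using LINT_exp[of 0 x] x by simp
  finally have "\<bar>LINT t:{0..x}|lborel. f t * exp t\<bar> \<le> C * (exp x - 1)" by (simp add: mult.commute)
  then have "\<bar>S_op f x\<bar> \<le> exp (- x) * (C * (exp x - 1))"
    unfolding S_op_def by (simp add: abs_mult)
  also have "\<dots> = C * (1 - exp (- x))" by (simp add: algebra_simps exp_minus field_simps)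
  also have "\<dots> \<le> C" using assms(3) by (simp add: mult_left_le)
  finally show ?thesis .
qed

lemma S_Linf:
  assumes f: "f \<in> Linf"
  shows "S_op f \<in> Linf"
proof -
  obtain C where C: "C \<ge> 0" "AE x in lborel. x \<ge> 0 \<longrightarrow> \<bar>f x\<bar> \<le> C" using Linf_bound[OF f] by blast
  have fm[measurable]: "f \<in> borel_measurable lborel" using Linf_meas[OF f] .
  have m1: "(\<lambda>x. LINT t:{0..x}|lborel. f t * exp t) \<in> borel_measurable lborel"
    by (rule indef_meas) measurable
  have "S_op f \<in> borel_measurable lborel"
    unfolding S_op_def using m1 by measurable
  moreover have "\<bar>S_op f x\<bar> \<le> C" if x: "x \<ge> 0" for x
  proof -
    have "\<bar>LINT t:{0..x}|lborel. exp t * f t\<bar> \<le> C * (LINT t:{0..x}|lborel. exp t)"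
      by (rule wbound[OF f C(2) cont_exp]) auto
    also have "\<dots> = C * (exp x - 1)" using LINT_exp[of 0 x] x by simp
    finally have "\<bar>LINT t:{0..x}|lborel. f t * exp t\<bar> \<le> C * (exp x - 1)" by (simp add: mult.commute)
    then have "\<bar>S_op f x\<bar> \<le> exp (- x) * (C * (exp x - 1))"
      unfolding S_op_def by (simp add: abs_mult)
    also have "\<dots> = C * (1 - exp (- x))" by (simp add: algebra_simps exp_minus field_simps)
    also have "\<dots> \<le> C" using C(1) by (simp add: mult_left_le)
    finally show ?thesis .
  qed
  ultimately show ?thesis by (intro LinfI) auto
qed

lemma S_int_identity:
  assumes f: "f \<in> Linf" and b: "0 \<le> b"
  shows "(LINT t:{0..b}|lborel. f t - S_op f t) = S_op f b"
proof -
  have "(LINT t:{0..b}|lborel. S_op f t)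
      = (LINT t:{0..b}|lborel. exp (- t) * (LINT s:{0..t}|lborel. exp s * f s))"
    unfolding S_op_def by (simp add: mult.commute)
  also have "\<dots> = (LINT s:{0..b}|lborel. exp s * f s * (LINT t:{s..b}|lborel. exp (- t)))"
    by (rule fub[OF f cont_exp cont_expm b])
  also have "\<dots> = (LINT s:{0..b}|lborel. f s - exp (- b) * (f s * exp s))"
  proof (rule set_lebesgue_integral_cong)
    show "\<forall>x. x \<in> {0..b} \<longrightarrow> exp x * f x * (LINT t:{x..b}|lborel. exp (- t)) = f x - exp (- b) * (f x * exp x)"
    proof (intro allI impI)
      fix x assume "x \<in> {0..b}"
      then have "(LINT t:{x..b}|lborel. exp (- t)) = exp (- x) - exp (- b)" by (intro LINT_expm) auto
      have e1: "exp x * exp (- x) = 1" by (simp add: exp_minus_inverse)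
      have "exp x * f x * (exp (- x) - exp (- b)) = f x * (exp x * exp (- x)) - exp (- b) * (f x * exp x)"
        by (simp add: algebra_simps)
      then show "exp x * f x * (LINT t:{x..b}|lborel. exp (- t)) = f x - exp (- b) * (f x * exp x)"
        unfolding \<open>(LINT t:{x..b}|lborel. exp (- t)) = exp (- x) - exp (- b)\<close> e1 by simp
    qed
  qed auto
  also have "\<dots> = Fi f b - S_op f b"
  proof -
    have i1: "set_integrable lborel {0..b} f" by (rule Linf_set_int1[OF f order.refl])
    have i2: "set_integrable lborel {0..b} (\<lambda>s. exp s * f s)"
      by (rule Linf_set_int[OF f cont_exp order.refl])
    then have i3: "set_integrable lborel {0..b} (\<lambda>s. exp (- b) * (f s * exp s))"
      by (simp add: mult.commute)
    show ?thesis
      using set_integral_diff(2)[OF i1 i3] by (simp add: Fi_def S_op_def)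
  qed
  finally have "(LINT t:{0..b}|lborel. S_op f t) = Fi f b - S_op f b" .
  moreover have "(LINT t:{0..b}|lborel. f t - S_op f t) = Fi f b - (LINT t:{0..b}|lborel. S_op f t)"
    using set_integral_diff(2)[OF Linf_set_int1[OF f order.refl] Linf_set_int1[OF S_Linf[OF f] order.refl]]
    by (simp add: Fi_def)
  ultimately show ?thesis by simp
qed

lemma S_window:
  assumes f: "f \<in> Linf" and x: "0 \<le> x" and th: "0 \<le> \<theta>"
  shows "(LINT t:{x..x+\<theta>}|lborel. f t - S_op f t) = S_op f (x + \<theta>) - S_op f x"
proof -
  have i: "set_integrable lborel {0..x+\<theta>} (\<lambda>t. f t - S_op f t)"
    using Linf_set_int1[OF Linf_diff[OF f S_Linf[OF f]] order.refl] .
  show ?thesis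
    using LINT_split[OF i x] th S_int_identity[OF f x] S_int_identity[OF f, of "x+\<theta>"] x
    by simp
qed



definition LS :: "(real \<Rightarrow> real) \<Rightarrow> real" where
  "LS v = real_of_ereal (Limsup at_top (\<lambda>x. ereal (v x)))"

lemma LS_bounds:
  fixes v :: "real \<Rightarrow> real"
  assumes B: "eventually (\<lambda>x. \<bar>v x\<bar> \<le> B) at_top"
  shows "Limsup at_top (\<lambda>x. ereal (v x)) \<le> ereal B" "ereal (- B) \<le> Limsup at_top (\<lambda>x. ereal (v x))"
proof -
  show "Limsup at_top (\<lambda>x. ereal (v x)) \<le> ereal B"
    by (rule Limsup_bounded) (use B in \<open>auto elim!: eventually_mono\<close>)
  have "ereal (- B) \<le> Liminf at_top (\<lambda>x. ereal (v x))"
    by (rule Liminf_bounded) (use B in \<open>auto elim!: eventually_mono\<close>)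
  also have "\<dots> \<le> Limsup at_top (\<lambda>x. ereal (v x))" by (rule Liminf_le_Limsup) simp
  finally show "ereal (- B) \<le> Limsup at_top (\<lambda>x. ereal (v x))" .
qed

lemma LS_eq:
  fixes v :: "real \<Rightarrow> real"
  assumes B: "eventually (\<lambda>x. \<bar>v x\<bar> \<le> B) at_top"
  shows "Limsup at_top (\<lambda>x. ereal (v x)) = ereal (LS v)"
  using LS_bounds[OF B] unfolding LS_def by (cases "Limsup at_top (\<lambda>x. ereal (v x))") auto

lemma LS_abs:
  fixes v :: "real \<Rightarrow> real"
  assumes B: "eventually (\<lambda>x. \<bar>v x\<bar> \<le> B) at_top"
  shows "\<bar>LS v\<bar> \<le> B"
  using LS_bounds[OF B] LS_eq[OF B] by auto

lemma LS_ev: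
  fixes v :: "real \<Rightarrow> real"
  assumes B: "eventually (\<lambda>x. \<bar>v x\<bar> \<le> B) at_top" and c: "LS v < c"
  shows "eventually (\<lambda>x. v x < c) at_top"
proof -
  have "Limsup at_top (\<lambda>x. ereal (v x)) < ereal c" using LS_eq[OF B] c by simp
  from Limsup_lessD[OF this] show ?thesis by simp
qed

lemma LS_le:
  fixes v :: "real \<Rightarrow> real"
  assumes B: "eventually (\<lambda>x. \<bar>v x\<bar> \<le> B) at_top"
    and d: "\<And>c. c > d \<Longrightarrow> eventually (\<lambda>x. v x < c) at_top"
  shows "LS v \<le> d"
proof -
  have "Limsup at_top (\<lambda>x. ereal (v x)) \<le> ereal d"
    unfolding Limsup_le_iff
  proof (intro allI impI)
    fix y :: ereal assume y: "y > ereal d"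
    show "eventually (\<lambda>x. y > ereal (v x)) at_top"
    proof (cases y)
      case (real c)
      then show ?thesis using d[of c] y by auto
    qed (use y in auto)
  qed
  then show ?thesis using LS_eq[OF B] by simp
qed

lemma LS_cong:
  fixes v w :: "real \<Rightarrow> real"
  assumes "eventually (\<lambda>x. v x = w x) at_top"
  shows "LS v = LS w"
  unfolding LS_def using Limsup_eq[of "\<lambda>x. ereal (v x)" "\<lambda>x. ereal (w x)" at_top] assms
  by (auto elim!: eventually_mono)

lemma fekete:
  fixes G :: "real \<Rightarrow> real"
  assumes sub: "\<And>s t. s > 0 \<Longrightarrow> t > 0 \<Longrightarrow> G (s + t) \<le> G s + G t"
    and bnd: "\<And>t. t > 0 \<Longrightarrow> \<bar>G t\<bar> \<le> C * t"
  shows "((\<lambda>t. G t / t) \<longlongrightarrow> Inf ((\<lambda>t. G t / t) ` {0<..})) at_top"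
proof -
  define m where "m = Inf ((\<lambda>t. G t / t) ` {0<..})"
  have Cnn: "C \<ge> 0" using bnd[of 1] by simp
  have lb: "G t / t \<ge> - C" if "t > 0" for t
    using bnd[OF that] that by (simp add: field_simps abs_le_iff)
  have ub: "G t / t \<le> C" if "t > 0" for t
    using bnd[OF that] that by (simp add: field_simps abs_le_iff)
  have bdd: "bdd_below ((\<lambda>t. G t / t) ` {0<..})"
    by (rule bdd_belowI[of _ "- C"]) (auto intro: lb)
  have ge: "m \<le> G t / t" if "t > 0" for t
    unfolding m_def by (rule cInf_lower) (use bdd that in auto)
  have iter: "G (real n * a + r) \<le> real n * G a + G r" if "a > 0" "r > 0" for n :: nat and a r
  proof (induction n)
    case 0 then show ?case by simp
  next
    case (Suc n)
    have "G (real (Suc n) * a + r) = G (a + (real n * a + r))" by (simp add: algebra_simps)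
    also have "\<dots> \<le> G a + G (real n * a + r)" using that by (intro sub add_nonneg_pos) auto
    also have "\<dots> \<le> real (Suc n) * G a + G r" using Suc by (simp add: algebra_simps)
    finally show ?case .
  qed
  have key: "G t / t \<le> G a / a + 2 * C * a / t" if a: "a > 0" and t: "t > 0" for a t
  proof -
    define k where "k = \<lceil>t / a\<rceil> - 1"
    have ta: "t / a > 0" using a t by simp
    have "real_of_int \<lceil>t / a\<rceil> > 0" using le_of_int_ceiling[of "t/a"] ta by linarith
    then have k0: "k \<ge> 0" unfolding k_def by simp
    define n where "n = nat k"
    have kn: "real n = real_of_int k" unfolding n_def using k0 by simp
    have c1: "real_of_int \<lceil>t / a\<rceil> < t / a + 1" by linarith
    have c2: "t / a \<le> real_of_int \<lceil>t / a\<rceil>" by (rule le_of_int_ceiling)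
    define r where "r = t - real n * a"
    have "real n < t / a" using c1 kn unfolding k_def by simp
    then have r0: "r > 0" unfolding r_def using a by (simp add: field_simps)
    have "t / a \<le> real n + 1" using c2 kn unfolding k_def by simp
    then have ra: "r \<le> a" unfolding r_def using a by (simp add: field_simps)
    have tt: "t = real n * a + r" unfolding r_def by simp
    have A0: "G t \<le> real n * G a + G r" unfolding tt by (rule iter[OF a r0])
    have A1: "G r \<le> C * r" using bnd[OF r0] by simp
    have A4: "C * r \<le> C * a" using ra Cnn by (intro mult_left_mono) auto
    have A2: "real n * G a = t * (G a / a) - r * (G a / a)" using a by (simp add: r_def field_simps)
    have "r * (- C) \<le> r * (G a / a)" using lb[OF a] r0 by (intro mult_left_mono) auto
    then have A3: "- (r * (G a / a)) \<le> C * r" by (simp add: mult.commute)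
    have "G t \<le> t * (G a / a) + 2 * C * a" using A0 A1 A2 A3 A4 by linarith
    then show ?thesis using t by (simp add: field_simps)
  qed
  show ?thesis
    unfolding m_def[symmetric]
  proof (rule tendstoI)
    fix e :: real assume e: "e > 0"
    have "\<exists>y\<in>(\<lambda>t. G t / t) ` {0<..}. y < m + e / 2"
      unfolding m_def by (rule cInf_lessD) (use e in auto)
    then obtain a where a: "a > 0" "G a / a < m + e / 2" by auto
    have "eventually (\<lambda>t. t > max 1 (4 * C * a / e + 1)) at_top" by (rule eventually_gt_at_top)
    then show "eventually (\<lambda>t. dist (G t / t) m < e) at_top"
    proof (rule eventually_mono)
      fix t assume t: "t > max 1 (4 * C * a / e + 1)"
      then have t0: "t > 0" by simp
      have "2 * C * a / t \<le> e / 2"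
      proof -
        have "4 * C * a \<le> e * t" using t e by (simp add: field_simps)
        then show ?thesis using t0 by (simp add: field_simps)
      qed
      then have "G t / t < m + e" using key[OF a(1) t0] a(2) by linarith
      moreover have "m \<le> G t / t" by (rule ge[OF t0])
      ultimately show "dist (G t / t) m < e" by (simp add: dist_real_def)
    qed
  qed
qed



definition Aw :: "(real \<Rightarrow> real) \<Rightarrow> real \<Rightarrow> real \<Rightarrow> real" where
  "Aw f \<theta> x = (1 / \<theta>) * (LINT t:{x..x+\<theta>}|lborel. f t)"

definition Phi :: "(real \<Rightarrow> real) \<Rightarrow> real \<Rightarrow> real" where
  "Phi f \<theta> = LS (Aw f \<theta>)"

lemma M1_upper_Phi: "M1_upper f = Lim at_top (Phi f)"
  unfolding M1_upper_def Phi_def LS_def Aw_def by simp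

lemma window_meas:
  fixes g :: "real \<Rightarrow> real"
  assumes g[measurable]: "g \<in> borel_measurable lborel"
  shows "(\<lambda>x. LINT t:{x..x+\<theta>}|lborel. g t) \<in> borel_measurable lborel"
proof -
  have "(\<lambda>(x, t). if x \<le> t \<and> t \<le> x + \<theta> then g t else 0) \<in> borel_measurable (lborel \<Otimes>\<^sub>M lborel)"
    by measurable
  then have "(\<lambda>x. \<integral>t. (if x \<le> t \<and> t \<le> x + \<theta> then g t else 0) \<partial>lborel) \<in> borel_measurable lborel"
    by (rule lborel.borel_measurable_lebesgue_integral)
  moreover have "(\<lambda>x. \<integral>t. (if x \<le> t \<and> t \<le> x + \<theta> then g t else 0) \<partial>lborel) = (\<lambda>x. LINT t:{x..x+\<theta>}|lborel. g t)"
    unfolding set_lebesgue_integral_def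
    by (intro ext Bochner_Integration.integral_cong) (auto split: split_indicator)
  ultimately show ?thesis by simp
qed

lemma Aw_Fi:
  assumes f: "f \<in> Linf" and x: "0 \<le> x" and th: "0 \<le> \<theta>"
  shows "Aw f \<theta> x = (Fi f (x + \<theta>) - Fi f x) / \<theta>"
  unfolding Aw_def using Fi_diff[OF f x, of "x+\<theta>"] th by simp

lemma Aw_bound:
  assumes f: "f \<in> Linf" and C: "AE x in lborel. x \<ge> 0 \<longrightarrow> \<bar>f x\<bar> \<le> C"
    and x: "0 \<le> x" and th: "0 < \<theta>"
  shows "\<bar>Aw f \<theta> x\<bar> \<le> C"
proof -
  have "\<bar>Fi f (x + \<theta>) - Fi f x\<bar> \<le> C * \<theta>" using Fi_lip0[OF f C x, of "x+\<theta>"] th by simp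
  then show ?thesis using Aw_Fi[OF f x] th by (simp add: field_simps abs_divide)
qed

lemma Aw_ev_bound:
  assumes f: "f \<in> Linf" and C: "AE x in lborel. x \<ge> 0 \<longrightarrow> \<bar>f x\<bar> \<le> C" and th: "0 < \<theta>"
  shows "eventually (\<lambda>x. \<bar>Aw f \<theta> x\<bar> \<le> C) at_top"
  using eventually_ge_at_top[of 0] by eventually_elim (rule Aw_bound[OF f C _ th])

lemma Aw_Linf:
  assumes f: "f \<in> Linf" and th: "0 < \<theta>"
  shows "Aw f \<theta> \<in> Linf"
proof -
  obtain C where C: "C \<ge> 0" "AE x in lborel. x \<ge> 0 \<longrightarrow> \<bar>f x\<bar> \<le> C" using Linf_bound[OF f] by blast
  have "Aw f \<theta> \<in> borel_measurable lborel"
    unfolding Aw_def using window_meas[OF Linf_meas[OF f], of \<theta>] by measurable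
  then show ?thesis using Aw_bound[OF f C(2) _ th] by (intro LinfI) auto
qed

lemma Phi_bound:
  assumes f: "f \<in> Linf" and C: "AE x in lborel. x \<ge> 0 \<longrightarrow> \<bar>f x\<bar> \<le> C" and th: "0 < \<theta>"
  shows "\<bar>Phi f \<theta>\<bar> \<le> C"
  unfolding Phi_def by (rule LS_abs[OF Aw_ev_bound[OF f C th]])

lemma Aw_add:
  assumes f: "f \<in> Linf" and x: "0 \<le> x" and a: "0 < a" and b: "0 < b"
  shows "(a + b) * Aw f (a + b) x = a * Aw f a x + b * Aw f b (x + a)"
  using Aw_Fi[OF f x, of "a+b"] Aw_Fi[OF f x, of a] Aw_Fi[OF f, of "x+a" b] a b x
  by (simp add: field_simps)

lemma Phi_sub:
  assumes f: "f \<in> Linf" and a: "0 < a" and b: "0 < b"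
  shows "(a + b) * Phi f (a + b) \<le> a * Phi f a + b * Phi f b"
proof -
  obtain C where C: "C \<ge> 0" "AE x in lborel. x \<ge> 0 \<longrightarrow> \<bar>f x\<bar> \<le> C" using Linf_bound[OF f] by blast
  define d where "d = (a * Phi f a + b * Phi f b) / (a + b)"
  have "Phi f (a + b) \<le> d" unfolding Phi_def
  proof (rule LS_le[OF Aw_ev_bound[OF f C(2)]])
    show "0 < a + b" using a b by simp
    fix c assume c: "c > d"
    define e where "e = c - d"
    have e: "e > 0" using c by (simp add: e_def)
    have ev1: "eventually (\<lambda>x. Aw f a x < Phi f a + e) at_top"
      unfolding Phi_def by (rule LS_ev[OF Aw_ev_bound[OF f C(2) a]]) (use e in simp)
    have ev2: "eventually (\<lambda>x. Aw f b x < Phi f b + e) at_top"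
      unfolding Phi_def by (rule LS_ev[OF Aw_ev_bound[OF f C(2) b]]) (use e in simp)
    then obtain X where X: "\<And>x. x \<ge> X \<Longrightarrow> Aw f b x < Phi f b + e" by (auto simp: eventually_at_top_linorder)
    have ev3: "eventually (\<lambda>x. Aw f b (x + a) < Phi f b + e) at_top"
      unfolding eventually_at_top_linorder by (rule exI[of _ X]) (use X a in auto)
    show "eventually (\<lambda>x. Aw f (a + b) x < c) at_top"
      using ev1 ev3 eventually_ge_at_top[of 0]
    proof eventually_elim
      case (elim x)
      have "(a + b) * Aw f (a + b) x = a * Aw f a x + b * Aw f b (x + a)"
        by (rule Aw_add[OF f elim(3) a b])
      also have "\<dots> < a * (Phi f a + e) + b * (Phi f b + e)"
        using elim(1,2) a b by (intro add_strict_mono mult_strict_left_mono) auto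
      also have "\<dots> = (a + b) * c"
      proof -
        have "a * Phi f a + b * Phi f b = (a + b) * d" using a b by (simp add: d_def)
        then show ?thesis unfolding e_def by (simp add: algebra_simps)
      qed
      finally show ?case using a b by (simp add: mult_less_cancel_left_pos)
    qed
  qed
  then show ?thesis using a b unfolding d_def by (simp add: field_simps)
qed

lemma Phi_tendsto:
  assumes f: "f \<in> Linf"
  shows "(Phi f \<longlongrightarrow> Inf (Phi f ` {0<..})) at_top" and "M1_upper f = Inf (Phi f ` {0<..})"
proof -
  obtain C where C: "C \<ge> 0" "AE x in lborel. x \<ge> 0 \<longrightarrow> \<bar>f x\<bar> \<le> C" using Linf_bound[OF f] by blast
  define G where "G t = t * Phi f t" for t
  have "((\<lambda>t. G t / t) \<longlongrightarrow> Inf ((\<lambda>t. G t / t) ` {0<..})) at_top"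
  proof (rule fekete)
    show "G (s + t) \<le> G s + G t" if "s > 0" "t > 0" for s t
      using Phi_sub[OF f that] unfolding G_def .
    show "\<bar>G t\<bar> \<le> C * t" if "t > 0" for t
      using Phi_bound[OF f C(2) that] that unfolding G_def by (simp add: abs_mult mult.commute)
  qed
  moreover have "(\<lambda>t. G t / t) ` {0<..} = Phi f ` {0<..}"
    unfolding G_def by (intro image_cong) auto
  moreover have "eventually (\<lambda>t. G t / t = Phi f t) at_top"
    using eventually_gt_at_top[of 0] by eventually_elim (simp add: G_def)
  ultimately show 1: "(Phi f \<longlongrightarrow> Inf (Phi f ` {0<..})) at_top"
    using tendsto_cong by fastforce
  show "M1_upper f = Inf (Phi f ` {0<..})"
    unfolding M1_upper_Phi by (rule tendsto_Lim[OF _ 1]) simp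
qed



lemma FTC_Icc':
  fixes a b :: real
  assumes ab: "a \<le> b"
    and G: "\<And>x. x \<in> {a..b} \<Longrightarrow> (G has_real_derivative K x) (at x within {a..b})"
    and K: "continuous_on {a..b} K"
  shows "(LINT x:{a..b}|lborel. K x) = G b - G a"
proof -
  have "(LBINT x=a..b. K x) = G b - G a"
    by (rule interval_integral_FTC_finite)
       (use ab K G in \<open>auto simp: has_real_derivative_iff_has_vector_derivative[symmetric]\<close>)
  then show ?thesis using interval_integral_Icc[OF ab, of K] by metis
qed

lemma P_facts:
  fixes F :: "real \<Rightarrow> real"
  assumes Fc: "continuous_on UNIV F"
  shows "(\<lambda>u. integral {0..u} F) = (\<lambda>u. LINT t:{0..u}|lborel. F t)"
    and "\<And>b t. t \<in> {0..b} \<Longrightarrow> ((\<lambda>u. integral {0..u} F) has_real_derivative F t) (at t within {0..b})"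
    and "\<And>t. t > 0 \<Longrightarrow> ((\<lambda>u. integral {0..u} F) has_real_derivative F t) (at t)"
proof -
  show "(\<lambda>u. integral {0..u} F) = (\<lambda>u. LINT t:{0..u}|lborel. F t)"
  proof
    fix u :: real
    show "integral {0..u} F = (LINT t:{0..u}|lborel. F t)"
    proof (cases "u < 0")
      case True then show ?thesis by (simp add: set_lebesgue_integral_def)
    next
      case False
      show ?thesis
        by (rule set_borel_integral_eq_integral(2)[symmetric])
           (rule borel_integrable_atLeastAtMost'[OF continuous_on_subset[OF Fc]], auto)
    qed
  qed
  show "((\<lambda>u. integral {0..u} F) has_real_derivative F t) (at t within {0..b})" if "t \<in> {0..b}" for b t
    using integral_has_vector_derivative[OF continuous_on_subset[OF Fc] that]
    by (simp add: has_real_derivative_iff_has_vector_derivative)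
  show "((\<lambda>u. integral {0..u} F) has_real_derivative F t) (at t)" if t: "t > 0" for t
  proof -
    have "((\<lambda>u. integral {0..u} F) has_vector_derivative F t) (at t within {0..t+1})"
      by (rule integral_has_vector_derivative[OF continuous_on_subset[OF Fc]]) (use t in auto)
    then have "((\<lambda>u. integral {0..u} F) has_vector_derivative F t) (at t within {0<..<t+1})"
      by (rule has_vector_derivative_within_subset) auto
    then have "((\<lambda>u. integral {0..u} F) has_vector_derivative F t) (at t)"
      using at_within_open[of t "{0<..<t+1}"] t by simp
    then show ?thesis by (simp add: has_real_derivative_iff_has_vector_derivative)
  qed
qed



lemma construct:
  fixes f :: "real \<Rightarrow> real" and \<theta> :: real
  assumes f: "f \<in> Linf" and th: "\<theta> > 0"
  shows "\<exists>h\<in>Linf. \<forall>x\<ge>0. h x - S_op h x = f x - Aw f \<theta> x"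
proof -
  obtain C where C: "C \<ge> 0" "AE x in lborel. x \<ge> 0 \<longrightarrow> \<bar>f x\<bar> \<le> C" using Linf_bound[OF f] by blast
  define F where "F = Fi f"
  have Fc: "continuous_on UNIV F" unfolding F_def by (rule Fi_cont[OF f])
  have Fm[measurable]: "F \<in> borel_measurable lborel" by (rule cont_meas[OF Fc])
  have Flip: "\<bar>F y - F x\<bar> \<le> C * \<bar>y - x\<bar>" for x y
    unfolding F_def by (rule Fi_lip[OF f C(2,1)])
  have F0: "F 0 = 0" unfolding F_def by (simp add: Fi_nonpos)
  have Fabs: "\<bar>F x\<bar> \<le> C * \<bar>x\<bar>" for x using Flip[of 0 x] F0 by simp
  define P where "P = (\<lambda>u. integral {0..u} F)"
  have PF: "P = (\<lambda>u. LINT t:{0..u}|lborel. F t)" unfolding P_def by (rule P_facts(1)[OF Fc])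
  have Pm[measurable]: "P \<in> borel_measurable lborel" unfolding PF by (rule indef_meas[OF Fm])
  have Pd1: "(P has_real_derivative F t) (at t within {0..b})" if "t \<in> {0..b}" for t b
    unfolding P_def by (rule P_facts(2)[OF Fc that])
  have Pd2: "(P has_real_derivative F t) (at t)" if "t > 0" for t
    unfolding P_def by (rule P_facts(3)[OF Fc that])
  have P0: "P 0 = 0" unfolding P_def by simp
  define W where "W x = (P (x + \<theta>) - P x - P \<theta>) / \<theta>" for x
  define A' where "A' t = (F (t + \<theta>) - F t) / \<theta>" for t
  have W0: "W 0 = 0" unfolding W_def using P0 by simp
  have Wd: "(W has_real_derivative A' t) (at t within {0..b})" if t: "t \<in> {0..b}" for t b
  proof -
    have "(P has_real_derivative F (t + \<theta>)) (at (t + \<theta>))" using t th by (intro Pd2) auto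
    then have "((\<lambda>x. P (x + \<theta>)) has_real_derivative F (t + \<theta>)) (at t)" by (simp add: DERIV_shift)
    then have d1: "((\<lambda>x. P (x + \<theta>)) has_real_derivative F (t + \<theta>)) (at t within {0..b})"
      by (rule has_field_derivative_at_within)
    have "((\<lambda>x. (P (x + \<theta>) - P x - P \<theta>) / \<theta>) has_real_derivative (F (t + \<theta>) - F t - 0) / \<theta>) (at t within {0..b})"
      by (intro DERIV_cdivide DERIV_diff d1 Pd1[OF t] DERIV_const)
    then show ?thesis unfolding W_def[abs_def] A'_def by simp
  qed
  have Wc: "continuous_on {0..b} W" for b
    unfolding continuous_on_eq_continuous_within
  proof
    fix t assume t: "t \<in> {0..b}"
    show "continuous (at t within {0..b}) W" by (rule DERIV_continuous[OF Wd[OF t]])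
  qed
  have Fsh: "continuous_on UNIV (\<lambda>x. F (x + \<theta>))"
    by (rule continuous_on_compose2[OF Fc]) (auto intro: continuous_intros)
  have A'c: "continuous_on {0..b} A'" for b
    unfolding A'_def using th by (intro continuous_intros continuous_on_subset[OF Fsh] continuous_on_subset[OF Fc]) auto
  have AwA: "Aw f \<theta> t = A' t" if "t \<ge> 0" for t
    unfolding A'_def F_def using Aw_Fi[OF f that] th by simp
  define h where "h x = f x - Aw f \<theta> x + (F x - W x)" for x
  have key: "(LINT t:{0..x}|lborel. h t * exp t) = exp x * (F x - W x)" if x: "x \<ge> 0" for x
  proof -
    define K where "K t = (A' t + W t) * exp t" for t
    have Kc: "continuous_on {0..x} K"
      unfolding K_def by (intro continuous_intros A'c Wc)
    have i1: "set_integrable lborel {0..x} (\<lambda>t. f t * exp t)"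
      using Linf_set_int[OF f cont_exp order.refl, of x] by (simp add: mult.commute)
    have i2: "set_integrable lborel {0..x} (\<lambda>t. F t * exp t)"
      by (rule borel_integrable_atLeastAtMost') (intro continuous_intros continuous_on_subset[OF Fc], auto)
    have i3: "set_integrable lborel {0..x} K"
      by (rule borel_integrable_atLeastAtMost'[OF Kc])
    have "(LINT t:{0..x}|lborel. h t * exp t) = (LINT t:{0..x}|lborel. f t * exp t + F t * exp t - K t)"
      by (rule set_lebesgue_integral_cong) (auto simp: h_def K_def AwA algebra_simps)
    also have "\<dots> = (LINT t:{0..x}|lborel. f t * exp t) + (LINT t:{0..x}|lborel. F t * exp t) - (LINT t:{0..x}|lborel. K t)"
      using set_integral_add(2)[OF i1 i2] set_integral_diff(2)[OF set_integral_add(1)[OF i1 i2] i3] by simp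
    also have "(LINT t:{0..x}|lborel. K t) = W x * exp x"
    proof -
      have "(LINT t:{0..x}|lborel. K t) = W x * exp x - W 0 * exp 0"
      proof (rule FTC_Icc'[OF x _ Kc])
        fix t assume t: "t \<in> {0..x}"
        have "((\<lambda>t. W t * exp t) has_real_derivative A' t * exp t + exp t * W t) (at t within {0..x})"
          by (intro DERIV_mult Wd[OF t] has_field_derivative_at_within[OF DERIV_exp])
        then show "((\<lambda>t. W t * exp t) has_real_derivative K t) (at t within {0..x})"
          by (rule DERIV_cong) (simp add: K_def algebra_simps)
      qed
      then show ?thesis using W0 by simp
    qed
    also have "(LINT t:{0..x}|lborel. F t * exp t) = exp x * F x - (LINT t:{0..x}|lborel. f t * exp t)"
    proof -
      have "(LINT t:{0..x}|lborel. F t * exp t) = (LINT t:{0..x}|lborel. exp t * (LINT s:{0..t}|lborel. 1 * f s))"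
        by (simp add: F_def Fi_def mult.commute)
      also have "\<dots> = (LINT s:{0..x}|lborel. 1 * f s * (LINT t:{s..x}|lborel. exp t))"
        by (rule fub[OF f _ cont_exp x]) simp
      also have "\<dots> = (LINT s:{0..x}|lborel. exp x * f s - f s * exp s)"
        by (rule set_lebesgue_integral_cong) (auto simp: LINT_exp algebra_simps)
      also have "\<dots> = exp x * F x - (LINT t:{0..x}|lborel. f t * exp t)"
        using set_integral_diff(2)[OF set_integrable_mult_right[OF Linf_set_int1[OF f order.refl, of x]] i1, of "exp x"]
        by (simp add: F_def Fi_def)
      finally show ?thesis .
    qed
    finally show ?thesis by (simp add: algebra_simps)
  qed
  have Sh: "S_op h x = F x - W x" if x: "x \<ge> 0" for x
    unfolding S_op_def using key[OF x] by (simp add: exp_minus field_simps)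
  have ubound: "\<bar>F x - W x\<bar> \<le> 2 * C * \<theta>" if x: "x \<ge> 0" for x
  proof -
    have int1: "F integrable_on {0..x+\<theta>}" by (rule integrable_continuous_interval[OF continuous_on_subset[OF Fc]]) auto
    have comb: "P (x + \<theta>) - P x = integral {x..x+\<theta>} F"
      unfolding P_def using Henstock_Kurzweil_Integration.integral_combine[OF x _ int1] th by simp
    have intc: "(\<lambda>t. F t - F x) integrable_on {x..x+\<theta>}"
      by (rule integrable_continuous_interval) (intro continuous_intros continuous_on_subset[OF Fc], auto)
    have intF: "F integrable_on {x..x+\<theta>}" by (rule integrable_continuous_interval[OF continuous_on_subset[OF Fc]]) auto
    have "integral {x..x+\<theta>} (\<lambda>t. F t - F x) = integral {x..x+\<theta>} F - \<theta> * F x"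
      using integral_diff[OF intF integrable_const_ivl[of "F x" x "x+\<theta>"]] th by simp
    moreover have "norm (integral {x..x+\<theta>} (\<lambda>t. F t - F x)) \<le> (C * \<theta>) * ((x + \<theta>) - x)"
    proof (rule integral_bound)
      show "continuous_on {x..x + \<theta>} (\<lambda>t. F t - F x)"
        by (intro continuous_intros continuous_on_subset[OF Fc]) auto
      fix t assume t: "t \<in> {x..x+\<theta>}"
      have "\<bar>F t - F x\<bar> \<le> C * \<bar>t - x\<bar>" by (rule Flip)
      also have "\<dots> \<le> C * \<theta>" using t C(1) by (intro mult_left_mono) auto
      finally show "norm (F t - F x) \<le> C * \<theta>" by simp
    qed (use th in auto)
    ultimately have b1: "\<bar>(P (x + \<theta>) - P x) - \<theta> * F x\<bar> \<le> C * \<theta> * \<theta>" using comb by simp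
    have "norm (integral {0..\<theta>} F) \<le> (C * \<theta>) * (\<theta> - 0)"
    proof (rule integral_bound)
      show "continuous_on {0..\<theta>} F" by (rule continuous_on_subset[OF Fc]) auto
      fix t assume t: "t \<in> {0..\<theta>}"
      have "\<bar>F t\<bar> \<le> C * \<bar>t\<bar>" by (rule Fabs)
      also have "\<dots> \<le> C * \<theta>" using t C(1) by (intro mult_left_mono) auto
      finally show "norm (F t) \<le> C * \<theta>" by simp
    qed (use th in auto)
    then have b2: "\<bar>P \<theta>\<bar> \<le> C * \<theta> * \<theta>" unfolding P_def by simp
    have "F x - W x = (\<theta> * F x - (P (x + \<theta>) - P x) + P \<theta>) / \<theta>"
      unfolding W_def using th by (simp add: field_simps)
    also have "\<bar>\<dots>\<bar> \<le> (C * \<theta> * \<theta> + C * \<theta> * \<theta>) / \<theta>"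
    proof -
      have "\<bar>\<theta> * F x - (P (x + \<theta>) - P x) + P \<theta>\<bar> \<le> C * \<theta> * \<theta> + C * \<theta> * \<theta>"
        using b1 b2 by linarith
      then have q: "\<bar>\<theta> * F x - (P (x + \<theta>) - P x) + P \<theta>\<bar> / \<theta> \<le> (C * \<theta> * \<theta> + C * \<theta> * \<theta>) / \<theta>"
        by (intro divide_right_mono) (use th in auto)
      have "\<bar>(\<theta> * F x - (P (x + \<theta>) - P x) + P \<theta>) / \<theta>\<bar> = \<bar>\<theta> * F x - (P (x + \<theta>) - P x) + P \<theta>\<bar> / \<theta>"
        using th by (simp add: abs_divide)
      with q show ?thesis by linarith
    qed
    also have "\<dots> = 2 * C * \<theta>" using th by (simp add: field_simps)
    finally show ?thesis .
  qed
  have hL: "h \<in> Linf"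
  proof -
    have Awm[measurable]: "Aw f \<theta> \<in> borel_measurable lborel" by (rule Linf_meas[OF Aw_Linf[OF f th]])
    have fm[measurable]: "f \<in> borel_measurable lborel" by (rule Linf_meas[OF f])
    have "h \<in> borel_measurable lborel" unfolding h_def[abs_def] W_def by measurable
    moreover have "AE x in lborel. x \<ge> 0 \<longrightarrow> \<bar>h x\<bar> \<le> C + C + 2 * C * \<theta>"
      using C(2)
    proof eventually_elim
      case (elim x)
      show ?case
      proof
        assume x: "x \<ge> 0"
        have "\<bar>f x\<bar> \<le> C" using elim x by auto
        moreover have "\<bar>Aw f \<theta> x\<bar> \<le> C" by (rule Aw_bound[OF f C(2) x th])
        moreover have "\<bar>F x - W x\<bar> \<le> 2 * C * \<theta>" by (rule ubound[OF x])
        ultimately show "\<bar>h x\<bar> \<le> C + C + 2 * C * \<theta>" unfolding h_def by linarith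
      qed
    qed
    ultimately show ?thesis by (rule LinfI_AE)
  qed
  show ?thesis
  proof (intro bexI[OF _ hL] allI impI)
    fix x :: real assume "x \<ge> 0"
    then show "h x - S_op h x = f x - Aw f \<theta> x" using Sh by (simp add: h_def)
  qed
qed



lemma expm_Linf: "(\<lambda>x. exp (- x)) \<in> Linf"
  by (rule LinfI[of _ 1]) (use cont_meas[OF cont_expm] in auto)

lemma phi_ev:
  assumes mean: "is_mean \<phi>" and e: "\<phi> (\<lambda>x. exp (- x)) = 0"
    and v: "v \<in> Linf" and ev: "eventually (\<lambda>x. v x \<le> c) at_top"
  shows "\<phi> v \<le> c"
proof -
  obtain B where B: "B \<ge> 0" "AE x in lborel. x \<ge> 0 \<longrightarrow> \<bar>v x\<bar> \<le> B" using Linf_bound[OF v] by blast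
  obtain X where X: "\<And>x. x \<ge> X \<Longrightarrow> v x \<le> c" using ev by (auto simp: eventually_at_top_linorder)
  define M where "M = (B + \<bar>c\<bar>) * exp X"
  have M0: "M \<ge> 0" unfolding M_def using B(1) by simp
  have l1: "(\<lambda>x. c - v x) \<in> Linf" by (rule Linf_diff[OF Linf_const v])
  have l2: "(\<lambda>x. (c - v x) + M * exp (- x)) \<in> Linf" by (rule Linf_add[OF l1 Linf_scale[OF expm_Linf]])
  have "\<phi> (\<lambda>x. (c - v x) + M * exp (- x)) \<ge> 0"
  proof (rule phi_pos[OF mean l2])
    show "AE x in lborel. 0 \<le> x \<longrightarrow> 0 \<le> c - v x + M * exp (- x)"
      using B(2)
    proof eventually_elim
      case (elim x)
      show ?case
      proof
        assume x: "0 \<le> x"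
        show "0 \<le> c - v x + M * exp (- x)"
        proof (cases "x \<ge> X")
          case True
          then show ?thesis using X[OF True] M0 by simp
        next
          case False
          have "exp (X - x) \<ge> 1" using False by simp
          have "M * exp (- x) = (B + \<bar>c\<bar>) * exp (X - x)"
            unfolding M_def by (simp add: exp_diff exp_minus field_simps)
          moreover have "(B + \<bar>c\<bar>) * 1 \<le> (B + \<bar>c\<bar>) * exp (X - x)"
            using \<open>exp (X - x) \<ge> 1\<close> B(1) by (intro mult_left_mono) auto
          ultimately have "M * exp (- x) \<ge> B + \<bar>c\<bar>" by simp
          moreover have "v x \<le> B" using elim x by auto
          ultimately show ?thesis by linarith
        qed
      qed
    qed
  qed
  moreover have "\<phi> (\<lambda>x. (c - v x) + M * exp (- x)) = c - \<phi> v"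
    using phi_add[OF mean l1 Linf_scale[OF expm_Linf]] phi_scale[OF mean expm_Linf, of M]
      phi_diff[OF mean Linf_const v] phi_const[OF mean] e by simp
  ultimately show ?thesis by simp
qed

lemma phi_LS:
  assumes mean: "is_mean \<phi>" and e: "\<phi> (\<lambda>x. exp (- x)) = 0"
    and v: "v \<in> Linf" and B: "eventually (\<lambda>x. \<bar>v x\<bar> \<le> B) at_top"
  shows "\<phi> v \<le> LS v"
proof (rule dense_ge)
  fix c assume "LS v < c"
  from LS_ev[OF B this] have "eventually (\<lambda>x. v x \<le> c) at_top" by (auto elim!: eventually_mono)
  then show "\<phi> v \<le> c" by (rule phi_ev[OF mean e v])
qed

lemma exp_killed:
  assumes mean: "is_mean \<phi>" and Hyp: "\<forall>f\<in>Linf. \<phi> (\<lambda>x. f x - S_op f x) = 0"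
  shows "\<phi> (\<lambda>x. exp (- x)) = 0"
proof -
  have "\<phi> (\<lambda>x. 1 - S_op (\<lambda>x. 1) x) = 0" using bspec[OF Hyp Linf_const[of 1]] by simp
  moreover have "\<phi> (\<lambda>x. 1 - S_op (\<lambda>x. 1) x) = \<phi> (\<lambda>x. exp (- x))"
  proof (rule phi_cong[OF mean Linf_diff[OF Linf_const S_Linf[OF Linf_const]] expm_Linf])
    show "AE x in lborel. 0 \<le> x \<longrightarrow> 1 - S_op (\<lambda>x. 1) x = exp (- x)"
    proof (rule AE_I2, rule impI)
      fix x :: real assume x: "0 \<le> x"
      have "S_op (\<lambda>x. 1) x = exp (- x) * (exp x - 1)"
        unfolding S_op_def using LINT_exp[OF x] by simp
      then show "1 - S_op (\<lambda>x. 1) x = exp (- x)" by (simp add: algebra_simps exp_minus_inverse)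
    qed
  qed
  ultimately show ?thesis by simp
qed

lemma dir_M1:
  assumes mean: "is_mean \<phi>" and Hyp: "\<forall>f\<in>Linf. \<phi> (\<lambda>x. f x - S_op f x) = 0"
  shows "\<phi> \<in> M1"
proof -
  have e: "\<phi> (\<lambda>x. exp (- x)) = 0" by (rule exp_killed[OF mean Hyp])
  have "\<phi> f \<le> M1_upper f" if f: "f \<in> Linf" for f
  proof -
    obtain C where C: "C \<ge> 0" "AE x in lborel. x \<ge> 0 \<longrightarrow> \<bar>f x\<bar> \<le> C" using Linf_bound[OF f] by blast
    have "\<phi> f \<le> Phi f \<theta>" if th: "\<theta> > 0" for \<theta>
    proof -
      obtain h where h: "h \<in> Linf" "\<forall>x\<ge>0. h x - S_op h x = f x - Aw f \<theta> x"
        using construct[OF f th] by blast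
      have "\<phi> (\<lambda>x. h x - S_op h x) = 0" using Hyp h(1) by blast
      moreover have "\<phi> (\<lambda>x. h x - S_op h x) = \<phi> (\<lambda>x. f x - Aw f \<theta> x)"
        by (rule phi_cong[OF mean Linf_diff[OF h(1) S_Linf[OF h(1)]] Linf_diff[OF f Aw_Linf[OF f th]]])
           (use h(2) in auto)
      ultimately have "\<phi> f = \<phi> (Aw f \<theta>)"
        using phi_diff[OF mean f Aw_Linf[OF f th]] by simp
      also have "\<dots> \<le> LS (Aw f \<theta>)"
        by (rule phi_LS[OF mean e Aw_Linf[OF f th] Aw_ev_bound[OF f C(2) th]])
      finally show ?thesis unfolding Phi_def .
    qed
    then have "\<phi> f \<le> Inf (Phi f ` {0<..})"
      by (intro cInf_greatest) (auto intro: exI[of _ 1])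
    then show ?thesis using Phi_tendsto(2)[OF f] by simp
  qed
  then show ?thesis using mean unfolding M1_def by blast
qed

lemma M1_upper_zero:
  assumes v: "v \<in> Linf" and D: "\<And>\<theta> x. \<theta> > 0 \<Longrightarrow> x \<ge> 0 \<Longrightarrow> \<bar>Aw v \<theta> x\<bar> \<le> D / \<theta>"
  shows "M1_upper v = 0"
proof -
  have PB: "\<bar>Phi v \<theta>\<bar> \<le> D / \<theta>" if th: "\<theta> > 0" for \<theta>
  proof -
    have "eventually (\<lambda>x. \<bar>Aw v \<theta> x\<bar> \<le> D / \<theta>) at_top"
      using eventually_ge_at_top[of 0] by eventually_elim (rule D[OF th])
    then show ?thesis unfolding Phi_def by (rule LS_abs)
  qed
  have lim: "((\<lambda>\<theta>. D / \<theta>) \<longlongrightarrow> 0) at_top"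
    by (rule tendsto_divide_0[OF tendsto_const]) (rule filterlim_at_top_imp_at_infinity[OF filterlim_ident])
  have "(Phi v \<longlongrightarrow> 0) at_top"
  proof (rule tendsto_sandwich[of "\<lambda>\<theta>. - (D / \<theta>)" _ _ "\<lambda>\<theta>. D / \<theta>"])
    show "eventually (\<lambda>\<theta>. - (D / \<theta>) \<le> Phi v \<theta>) at_top"
      using eventually_gt_at_top[of 0]
    proof eventually_elim
      case (elim \<theta>) then show ?case using PB[OF elim] by linarith
    qed
    show "eventually (\<lambda>\<theta>. Phi v \<theta> \<le> D / \<theta>) at_top"
      using eventually_gt_at_top[of 0] by eventually_elim (use PB in \<open>auto simp: abs_le_iff\<close>)
    show "((\<lambda>\<theta>. - (D / \<theta>)) \<longlongrightarrow> 0) at_top" using tendsto_minus[OF lim] by simp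
  qed (rule lim)
  then show ?thesis unfolding M1_upper_Phi by (rule tendsto_Lim[rotated]) simp
qed

lemma dir_kill:
  assumes "\<phi> \<in> M1" and f: "f \<in> Linf"
  shows "\<phi> (\<lambda>x. f x - S_op f x) = 0"
proof -
  have mean: "is_mean \<phi>" and le: "\<And>g. g \<in> Linf \<Longrightarrow> \<phi> g \<le> M1_upper g" using assms unfolding M1_def by auto
  obtain C where C: "C \<ge> 0" "AE x in lborel. x \<ge> 0 \<longrightarrow> \<bar>f x\<bar> \<le> C" using Linf_bound[OF f] by blast
  define g where "g = (\<lambda>x. f x - S_op f x)"
  have gL: "g \<in> Linf" unfolding g_def by (rule Linf_diff[OF f S_Linf[OF f]])
  have Awg: "Aw g \<theta> x = (S_op f (x + \<theta>) - S_op f x) / \<theta>" if "\<theta> > 0" "x \<ge> 0" for \<theta> x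
    unfolding Aw_def g_def using S_window[OF f that(2), of \<theta>] that by simp
  have Awb: "\<bar>Aw g \<theta> x\<bar> \<le> (2 * C) / \<theta>" if th: "\<theta> > 0" and x: "x \<ge> 0" for \<theta> x
  proof -
    have "\<bar>S_op f (x + \<theta>)\<bar> \<le> C" "\<bar>S_op f x\<bar> \<le> C"
      using S_bound[OF f C(2) C(1)] x th by auto
    then have "\<bar>S_op f (x + \<theta>) - S_op f x\<bar> \<le> 2 * C" by linarith
    then show ?thesis using Awg[OF th x] th by (simp add: abs_divide divide_right_mono)
  qed
  have gm: "M1_upper g = 0" by (rule M1_upper_zero[OF gL Awb])
  have ngL: "(\<lambda>x. - g x) \<in> Linf" by (rule Linf_uminus[OF gL])
  have negAw: "Aw (\<lambda>x. - g x) \<theta> x = - Aw g \<theta> x" if "\<theta> > 0" "x \<ge> 0" for \<theta> x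
    unfolding Aw_def using set_integral_uminus[OF Linf_set_int1[OF gL that(2), of "x+\<theta>"]] by simp
  have ngm: "M1_upper (\<lambda>x. - g x) = 0"
    by (rule M1_upper_zero[OF ngL, of "2 * C"]) (simp add: negAw Awb)
  have "\<phi> g \<le> 0" using le[OF gL] gm by simp
  moreover have "\<phi> (\<lambda>x. - g x) \<le> 0" using le[OF ngL] ngm by simp
  then have "\<phi> g \<ge> 0" using phi_uminus[OF mean gL] by simp
  ultimately show ?thesis unfolding g_def by simp
qed

theorem theorem3p4:
  fixes \<phi> :: "(real \<Rightarrow> real) \<Rightarrow> real"
  assumes "is_mean \<phi>"
  shows "(\<phi> \<in> M1 \<longleftrightarrow> (\<forall>f\<in>Linf. \<phi> (\<lambda>x. f x - S_op f x) = 0))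
       \<and> (\<phi> \<in> M1 \<longleftrightarrow> (\<forall>f\<in>Linf. \<phi> (S_op f) = \<phi> f))"
proof -
  have 1: "\<phi> \<in> M1 \<longleftrightarrow> (\<forall>f\<in>Linf. \<phi> (\<lambda>x. f x - S_op f x) = 0)"
    using dir_kill dir_M1[OF assms] by blast
  have "(\<forall>f\<in>Linf. \<phi> (\<lambda>x. f x - S_op f x) = 0) \<longleftrightarrow> (\<forall>f\<in>Linf. \<phi> (S_op f) = \<phi> f)"
    using phi_diff[OF assms _ S_Linf] by auto
  with 1 show ?thesis by blast
qed


end
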